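(* Let ${\cal G}$ be a graph as described in the context and let $f$ be an edgewise linear function on ${\cal G}$. Then for every $p\ge 1$, $$\|f\|_{p,{\cal E}}\le \rho_{\sup}^{1/p}\,\|f\|_{p,{\cal V}}.$$
   Context: A graph ${\cal G}$ consists of an undirected graph $(V,E)$ (possibly infinite; multiple edges and self-loops allowed), a length $\ell_e>0$ for each edge $e$, a specified subset $\partial{\cal G}\subseteq V$ of boundary vertices, a vertex measure ${\cal V}$ (a measure supported on $V$ with ${\cal V}(v)>0$ for every $v$), and an edge measure ${\cal E}$ (zero on vertices, and on the interior of each edge $e$ equal to $a_e>0$ times Lebesgue measure). ${\cal G}$ is identified with its geometric realization (a closed interval of length $\ell_e$ attached between the endpoints of each edge $e$). A function is edgewise linear if it is continuous on ${\cal G}$ and linear on each edge interval. $\|f\|_{p,\mu}=(\int_{\cal G}|f|^p\,d\mu)^{1/p}$. The half-degree of $v$ is $\rho(v)={\cal V}(v)^{-1}\sum_{e\ni v}{\cal E}(e)/2$, and $\rho_{\sup}=\sup_{v\in V}\rho(v)$. *)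

theory Defs
  imports "HOL-Analysis.Analysis"
begin

text \<open>A metric graph: vertices of type 'v, edges of type 'e (possibly infinite),
  ends e = (u, w) are the endpoints of e (u = w allowed: self-loop; multiple edges allowed),
  len e > 0 is the length, a e > 0 is the density of the edge measure on e,
  Vm v > 0 is the vertex measure of v. Edge e is realised as the interval [0, len e],
  with 0 identified with fst (ends e) and len e with snd (ends e).\<close>

definition metric_graph ::
  "('e \<Rightarrow> 'v \<times> 'v) \<Rightarrow> ('e \<Rightarrow> real) \<Rightarrow> ('e \<Rightarrow> real) \<Rightarrow> ('v \<Rightarrow> real) \<Rightarrow> bool" where
  "metric_graph ends len a Vm \<longleftrightarrow>
     (\<forall>e. len e > 0) \<and> (\<forall>e. a e > 0) \<and> (\<forall>v. Vm v > 0)"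

text \<open>A function on the geometric realisation is given by its values fv on vertices and
  fe e t at the point of edge e at distance t from fst (ends e), 0 \<le> t \<le> len e.\<close>

definition edgewise_linear ::
  "('e \<Rightarrow> 'v \<times> 'v) \<Rightarrow> ('e \<Rightarrow> real) \<Rightarrow> ('v \<Rightarrow> real) \<Rightarrow> ('e \<Rightarrow> real \<Rightarrow> real) \<Rightarrow> bool" where
  "edgewise_linear ends len fv fe \<longleftrightarrow>
     (\<forall>e. (\<exists>c d. \<forall>t\<in>{0..len e}. fe e t = c + d * t)
          \<and> fe e 0 = fv (fst (ends e)) \<and> fe e (len e) = fv (snd (ends e)))"

definition edge_mass :: "('e \<Rightarrow> real) \<Rightarrow> ('e \<Rightarrow> real) \<Rightarrow> 'e \<Rightarrow> real" where
  "edge_mass len a e = a e * len e"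

text \<open>Half-degree: rho v = Vm(v)^{-1} * sum over edges e incident to v of E(e)/2,
  where a self-loop at v is incident to v twice (once per endpoint).\<close>
definition half_degree ::
  "('e \<Rightarrow> 'v \<times> 'v) \<Rightarrow> ('e \<Rightarrow> real) \<Rightarrow> ('e \<Rightarrow> real) \<Rightarrow> ('v \<Rightarrow> real) \<Rightarrow> 'v \<Rightarrow> ennreal" where
  "half_degree ends len a Vm v =
     ((\<integral>\<^sup>+ e. (if fst (ends e) = v then ennreal (edge_mass len a e / 2) else 0) \<partial>count_space UNIV)
    + (\<integral>\<^sup>+ e. (if snd (ends e) = v then ennreal (edge_mass len a e / 2) else 0) \<partial>count_space UNIV))
     / ennreal (Vm v)"

definition rho_sup ::
  "('e \<Rightarrow> 'v \<times> 'v) \<Rightarrow> ('e \<Rightarrow> real) \<Rightarrow> ('e \<Rightarrow> real) \<Rightarrow> ('v \<Rightarrow> real) \<Rightarrow> ennreal" where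
  "rho_sup ends len a Vm = (SUP v. half_degree ends len a Vm v)"

definition enn_root :: "real \<Rightarrow> ennreal \<Rightarrow> ennreal" where
  "enn_root p x = (if x = \<infinity> then \<infinity> else ennreal (enn2real x powr (1 / p)))"

definition norm_V :: "('v \<Rightarrow> real) \<Rightarrow> real \<Rightarrow> ('v \<Rightarrow> real) \<Rightarrow> ennreal" where
  "norm_V Vm p fv = enn_root p (\<integral>\<^sup>+ v. ennreal (Vm v * \<bar>fv v\<bar> powr p) \<partial>count_space UNIV)"

definition norm_E ::
  "('e \<Rightarrow> real) \<Rightarrow> ('e \<Rightarrow> real) \<Rightarrow> real \<Rightarrow> ('e \<Rightarrow> real \<Rightarrow> real) \<Rightarrow> ennreal" where
  "norm_E len a p fe = enn_root p
     (\<integral>\<^sup>+ e. ennreal (a e) * (\<integral>\<^sup>+ t\<in>{0<..<len e}. ennreal (\<bar>fe e t\<bar> powr p) \<partial>lborel)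
       \<partial>count_space UNIV)"

end

theory Submission
  imports Defs
begin

lemma nn_count_SUP:
  fixes f :: "'a \<Rightarrow> ennreal"
  shows "(\<integral>\<^sup>+x. f x \<partial>count_space UNIV) = (SUP F\<in>{F. finite F}. sum f F)"
proof (rule antisym)
  let ?M = "SUP F\<in>{F. finite F}. sum f F"
  show "?M \<le> (\<integral>\<^sup>+x. f x \<partial>count_space UNIV)"
  proof (rule SUP_least)
    fix F :: "'a set" assume "F \<in> {F. finite F}"
    then have "sum f F = (\<integral>\<^sup>+x. f x * indicator F x \<partial>count_space UNIV)"
      by (subst nn_integral_count_space'[of F]) auto
    also have "\<dots> \<le> (\<integral>\<^sup>+x. f x \<partial>count_space UNIV)"
      by (intro nn_integral_mono) (auto simp: indicator_def)
    finally show "sum f F \<le> (\<integral>\<^sup>+x. f x \<partial>count_space UNIV)" .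
  qed
  show "(\<integral>\<^sup>+x. f x \<partial>count_space UNIV) \<le> ?M"
    unfolding nn_integral_def
  proof (rule SUP_least)
    fix g assume g: "g \<in> {g. simple_function (count_space UNIV) g \<and> g \<le> f}"
    show "integral\<^sup>S (count_space UNIV) g \<le> ?M"
    proof (cases "finite {x. g x \<noteq> 0}")
      case True
      have "integral\<^sup>S (count_space UNIV) g = integral\<^sup>N (count_space UNIV) g"
        using g by (simp add: nn_integral_eq_simple_integral)
      also have "\<dots> = sum g {x. g x \<noteq> 0}"
        by (rule nn_integral_count_space') (use True in auto)
      also have "\<dots> \<le> sum f {x. g x \<noteq> 0}"
        using g by (intro sum_mono) (auto simp: le_fun_def)
      also have "\<dots> \<le> ?M" using True by (intro SUP_upper) auto
      finally show ?thesis .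
    next
      case False
      have fin: "finite (g ` UNIV)" using g by simp
      have "{x. g x \<noteq> 0} = (\<Union>c\<in>g`UNIV - {0}. {x. g x = c})" by auto
      then obtain c where c: "c \<noteq> 0" "infinite {x. g x = c}"
        using False fin by (metis (no_types, lifting) Diff_iff finite_Diff finite_UN insertI1)
      have "?M = \<infinity>"
      proof (rule ccontr)
        assume "?M \<noteq> \<infinity>"
        then obtain m where m: "?M = ennreal m" "m \<ge> 0"
          by (cases ?M rule: ennreal_cases) auto
        obtain c' where c': "c' > 0" "ennreal c' \<le> c"
        proof (cases c rule: ennreal_cases)
          case (real r) then show ?thesis using c that[of r] by auto
        next
          case top then show ?thesis using that[of 1] by auto
        qed
        obtain n :: nat where n: "m < real n * c'"
          using ex_less_of_nat_mult[OF c'(1)] by auto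
        obtain F where F: "F \<subseteq> {x. g x = c}" "card F = n" "finite F"
          using c(2) infinite_arbitrarily_large by blast
        have "ennreal (real n * c') = sum (\<lambda>_. ennreal c') F"
          using F c' by (simp add: ennreal_mult' ennreal_of_nat_eq_real_of_nat)
        also have "\<dots> \<le> sum g F" using F c' by (intro sum_mono) auto
        also have "\<dots> \<le> sum f F" using g by (intro sum_mono) (auto simp: le_fun_def)
        also have "\<dots> \<le> ?M" using F by (intro SUP_upper) auto
        finally have "ennreal (real n * c') \<le> ennreal m" using m by simp
        then show False using n m c' by (simp add: ennreal_le_iff)
      qed
      then have eq: "?M = top" by (simp only: infinity_ennreal_def)
      show ?thesis by (subst eq) (rule top_greatest)
    qed
  qed
qed

lemma sum_le_nn_count:
  fixes f :: "'a \<Rightarrow> ennreal"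
  assumes "finite F"
  shows "sum f F \<le> (\<integral>\<^sup>+x. f x \<partial>count_space UNIV)"
  unfolding nn_count_SUP using assms by (intro SUP_upper) auto

lemma nn_count_swap_le:
  fixes f :: "'a \<Rightarrow> 'b \<Rightarrow> ennreal"
  shows "(\<integral>\<^sup>+x. \<integral>\<^sup>+y. f x y \<partial>count_space UNIV \<partial>count_space UNIV)
       \<le> (\<integral>\<^sup>+y. \<integral>\<^sup>+x. f x y \<partial>count_space UNIV \<partial>count_space UNIV)"
  unfolding nn_count_SUP[of "\<lambda>x. \<integral>\<^sup>+y. f x y \<partial>count_space UNIV"]
proof (rule SUP_least)
  fix F :: "'a set" assume F: "F \<in> {F. finite F}"
  have "(\<Sum>x\<in>F. \<integral>\<^sup>+y. f x y \<partial>count_space UNIV) = (\<integral>\<^sup>+y. (\<Sum>x\<in>F. f x y) \<partial>count_space UNIV)"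
    using F by (intro nn_integral_sum[symmetric]) auto
  also have "\<dots> \<le> (\<integral>\<^sup>+y. \<integral>\<^sup>+x. f x y \<partial>count_space UNIV \<partial>count_space UNIV)"
    using F by (intro nn_integral_mono sum_le_nn_count) auto
  finally show "(\<Sum>x\<in>F. \<integral>\<^sup>+y. f x y \<partial>count_space UNIV) \<le> (\<integral>\<^sup>+y. \<integral>\<^sup>+x. f x y \<partial>count_space UNIV \<partial>count_space UNIV)" .
qed

lemma nn_count_swap:
  fixes f :: "'a \<Rightarrow> 'b \<Rightarrow> ennreal"
  shows "(\<integral>\<^sup>+x. \<integral>\<^sup>+y. f x y \<partial>count_space UNIV \<partial>count_space UNIV)
       = (\<integral>\<^sup>+y. \<integral>\<^sup>+x. f x y \<partial>count_space UNIV \<partial>count_space UNIV)"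
  by (rule antisym) (rule nn_count_swap_le, rule nn_count_swap_le[of "\<lambda>y x. f x y"])

lemma nn_count_reindex:
  fixes k :: "'e \<Rightarrow> 'v" and c :: "'e \<Rightarrow> ennreal" and g :: "'v \<Rightarrow> ennreal"
  shows "(\<integral>\<^sup>+e. c e * g (k e) \<partial>count_space UNIV)
       = (\<integral>\<^sup>+v. g v * (\<integral>\<^sup>+e. (if k e = v then c e else 0) \<partial>count_space UNIV) \<partial>count_space UNIV)"
proof -
  have "(\<integral>\<^sup>+e. c e * g (k e) \<partial>count_space UNIV)
      = (\<integral>\<^sup>+e. \<integral>\<^sup>+v. (if k e = v then c e * g v else 0) \<partial>count_space UNIV \<partial>count_space UNIV)"
    by (intro nn_integral_cong, subst nn_integral_count_space'[of "{k _}"]) auto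
  also have "\<dots> = (\<integral>\<^sup>+v. \<integral>\<^sup>+e. (if k e = v then c e * g v else 0) \<partial>count_space UNIV \<partial>count_space UNIV)"
    by (rule nn_count_swap)
  also have "\<dots> = (\<integral>\<^sup>+v. g v * (\<integral>\<^sup>+e. (if k e = v then c e else 0) \<partial>count_space UNIV) \<partial>count_space UNIV)"
  proof (intro nn_integral_cong)
    fix v
    have "(\<integral>\<^sup>+e. (if k e = v then c e * g v else 0) \<partial>count_space UNIV)
        = (\<integral>\<^sup>+e. g v * (if k e = v then c e else 0) \<partial>count_space UNIV)"
      by (intro nn_integral_cong) (simp add: mult.commute)
    also have "\<dots> = g v * (\<integral>\<^sup>+e. (if k e = v then c e else 0) \<partial>count_space UNIV)"
      by (rule nn_integral_cmult) simp
    finally show "(\<integral>\<^sup>+e. (if k e = v then c e * g v else 0) \<partial>count_space UNIV)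
        = g v * (\<integral>\<^sup>+e. (if k e = v then c e else 0) \<partial>count_space UNIV)" .
  qed
  finally show ?thesis .
qed

lemma powr_convex_ineq:
  fixes x y s p :: real
  assumes "x \<ge> 0" "y \<ge> 0" "0 \<le> s" "s \<le> 1" "p \<ge> 1"
  shows "((1-s)*x + s*y) powr p \<le> (1-s) * x powr p + s * y powr p"
proof -
  have sp: "t powr p \<le> t" if "0 \<le> t" "t \<le> 1" for t :: real
  proof (cases "t = 0")
    case False
    then have "t powr p \<le> t powr 1" using that assms by (intro powr_mono') auto
    then show ?thesis using that by simp
  qed (use assms in simp)
  show ?thesis
  proof (cases "x = 0")
    case True
    have "(s*y) powr p = s powr p * y powr p" using assms by (simp add: powr_mult)
    also have "\<dots> \<le> s * y powr p" using sp[of s] assms by (intro mult_right_mono) auto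
    finally show ?thesis using True assms by simp
  next
    case x: False
    show ?thesis
    proof (cases "y = 0")
      case True
      have "((1-s)*x) powr p = (1-s) powr p * x powr p" using assms by (simp add: powr_mult)
      also have "\<dots> \<le> (1-s) * x powr p" using sp[of "1-s"] assms by (intro mult_right_mono) auto
      finally show ?thesis using True assms by simp
    next
      case False
      show ?thesis
        using convex_onD[OF powr_convex[OF assms(5)], of s x y] assms x False by simp
    qed
  qed
qed

lemma edge_bound:
  fixes h :: "real \<Rightarrow> real"
  assumes L: "L > 0" and p: "p \<ge> 1" and lin: "\<forall>t\<in>{0..L}. h t = c + d*t"
  shows "(\<integral>\<^sup>+t\<in>{0<..<L}. ennreal (\<bar>h t\<bar> powr p) \<partial>lborel)
           \<le> ennreal (L/2 * (\<bar>h 0\<bar> powr p + \<bar>h L\<bar> powr p))"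
proof -
  define A where "A = \<bar>h 0\<bar> powr p"
  define B where "B = \<bar>h L\<bar> powr p"
  define q where "q t = (1 - t/L) * A + (t/L) * B" for t
  have h0: "h 0 = c" using lin L by auto
  have hL: "h L = c + d * L" using lin L by auto
  have pt: "\<bar>h t\<bar> powr p \<le> q t" if t: "t \<in> {0..L}" for t
  proof -
    define s where "s = t/L"
    have s: "0 \<le> s" "s \<le> 1" using t L by (auto simp: s_def)
    have ht: "h t = c + d * t" using lin t by auto
    have "h t = (1-s) * h 0 + s * h L" using L unfolding ht h0 hL s_def by (simp add: field_simps)
    then have "\<bar>h t\<bar> \<le> \<bar>(1-s) * h 0\<bar> + \<bar>s * h L\<bar>" by (simp add: abs_triangle_ineq)
    also have "\<dots> = (1-s)*\<bar>h 0\<bar> + s*\<bar>h L\<bar>" using s by (simp add: abs_mult)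
    finally have "\<bar>h t\<bar> powr p \<le> ((1-s)*\<bar>h 0\<bar> + s*\<bar>h L\<bar>) powr p"
      using p by (intro powr_mono2) auto
    also have "\<dots> \<le> (1-s)*A + s*B"
      unfolding A_def B_def using s p by (intro powr_convex_ineq) auto
    finally show ?thesis by (simp add: q_def s_def)
  qed
  have qnn: "q t \<ge> 0" if "t \<in> {0..L}" for t
    using pt[OF that] by (meson order_trans powr_ge_zero)
  have int: "(q has_integral L/2*(A+B)) {0..L}"
  proof -
    define F where "F t = A*t - A*t^2/(2*L) + B*t^2/(2*L)" for t
    have "(q has_integral F L - F 0) {0..L}"
    proof (rule fundamental_theorem_of_calculus)
      show "0 \<le> L" using L by simp
      fix t assume "t \<in> {0..L}"
      have "(F has_real_derivative q t) (at t within {0..L})"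
        unfolding F_def q_def using L
        by (auto intro!: derivative_eq_intros simp: field_simps)
      then show "(F has_vector_derivative q t) (at t within {0..L})"
        by (simp add: has_real_derivative_iff_has_vector_derivative)
    qed
    moreover have "F L - F 0 = L/2*(A+B)" using L by (simp add: F_def field_simps power2_eq_square)
    ultimately show ?thesis by simp
  qed
  have "(\<integral>\<^sup>+t\<in>{0<..<L}. ennreal (\<bar>h t\<bar> powr p) \<partial>lborel)
      \<le> (\<integral>\<^sup>+t. ennreal (indicator {0..L} t * q t) \<partial>lborel)"
    by (intro nn_integral_mono) (auto simp: indicator_def intro!: pt ennreal_leI)
  also have "\<dots> = ennreal (L/2*(A+B))"
    by (rule nn_integral_has_integral_lebesgue[OF qnn int])
  finally show ?thesis by (simp add: A_def B_def)
qed

lemma enn_root_mono: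
  assumes "p > 0" "x \<le> y"
  shows "enn_root p x \<le> enn_root p y"
proof (cases "y = \<infinity>")
  case True then show ?thesis by (simp add: enn_root_def)
next
  case False
  then have xf: "x \<noteq> \<infinity>" using assms(2) by (metis infinity_ennreal_def top.extremum_uniqueI)
  have le: "enn2real x \<le> enn2real y" using assms(2) False by (simp add: enn2real_mono top.not_eq_extremum)
  have "enn2real x powr (1/p) \<le> enn2real y powr (1/p)"
    using le assms(1) by (intro powr_mono2) auto
  then show ?thesis using False xf unfolding enn_root_def by (simp add: ennreal_leI)
qed

lemma enn_root_0: "enn_root p 0 = 0"
  by (simp add: enn_root_def)

lemma enn_root_pos: "p > 0 \<Longrightarrow> x \<noteq> 0 \<Longrightarrow> enn_root p x \<noteq> 0"
  unfolding enn_root_def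
  by (cases x rule: ennreal_cases) auto

lemma enn_root_mult:
  assumes "p > 0"
  shows "enn_root p (x * y) = enn_root p x * enn_root p y"
proof (cases "x = 0 \<or> y = 0")
  case True then show ?thesis by (auto simp: enn_root_0)
next
  case nz: False
  show ?thesis
  proof (cases "x = top \<or> y = top")
    case True
    then have "x * y = top" using nz by (auto simp: ennreal_mult_eq_top_iff)
    moreover have "enn_root p x * enn_root p y = top"
      using True nz enn_root_pos[OF assms, of x] enn_root_pos[OF assms, of y]
      by (auto simp: enn_root_def ennreal_mult_eq_top_iff)
    ultimately show ?thesis by (simp add: enn_root_def)
  next
    case False
    then obtain r s where rs: "x = ennreal r" "y = ennreal s" "r \<ge> 0" "s \<ge> 0"
      by (metis ennreal_cases)
    have xy: "x * y = ennreal (r * s)" using rs by (simp add: ennreal_mult)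
    have "enn_root p (x * y) = ennreal ((r * s) powr (1/p))"
      unfolding xy enn_root_def using rs by simp
    also have "\<dots> = ennreal (r powr (1/p)) * ennreal (s powr (1/p))"
      using rs by (simp add: powr_mult ennreal_mult)
    also have "\<dots> = enn_root p x * enn_root p y"
      unfolding enn_root_def using rs by simp
    finally show ?thesis .
  qed
qed

theorem mainTheorem2:
  fixes ends :: "'e \<Rightarrow> 'v \<times> 'v" and len a :: "'e \<Rightarrow> real" and Vm :: "'v \<Rightarrow> real"
    and fv :: "'v \<Rightarrow> real" and fe :: "'e \<Rightarrow> real \<Rightarrow> real" and p :: real
  assumes "metric_graph ends len a Vm"
    and "edgewise_linear ends len fv fe"
    and "p \<ge> 1"
  shows "norm_E len a p fe \<le> enn_root p (rho_sup ends len a Vm) * norm_V Vm p fv"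
proof -
  have lenp: "\<And>e. len e > 0" and ap: "\<And>e. a e > 0" and Vp: "\<And>v. Vm v > 0"
    using assms(1) by (auto simp: metric_graph_def)
  have p0: "p > 0" using assms(3) by simp
  define g where "g v = ennreal (\<bar>fv v\<bar> powr p)" for v
  define c where "c e = ennreal (edge_mass len a e / 2)" for e
  define S1 where "S1 v = (\<integral>\<^sup>+ e. (if fst (ends e) = v then c e else 0) \<partial>count_space UNIV)" for v
  define S2 where "S2 v = (\<integral>\<^sup>+ e. (if snd (ends e) = v then c e else 0) \<partial>count_space UNIV)" for v
  define \<rho> where "\<rho> = rho_sup ends len a Vm"
  define XE where "XE = (\<integral>\<^sup>+ e. ennreal (a e) * (\<integral>\<^sup>+ t\<in>{0<..<len e}. ennreal (\<bar>fe e t\<bar> powr p) \<partial>lborel)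
       \<partial>count_space UNIV)"
  define XV where "XV = (\<integral>\<^sup>+ v. ennreal (Vm v * \<bar>fv v\<bar> powr p) \<partial>count_space UNIV)"
  have hd: "half_degree ends len a Vm v = (S1 v + S2 v) / ennreal (Vm v)" for v
    unfolding half_degree_def S1_def S2_def c_def ..
  have edge: "ennreal (a e) * (\<integral>\<^sup>+ t\<in>{0<..<len e}. ennreal (\<bar>fe e t\<bar> powr p) \<partial>lborel)
      \<le> c e * g (fst (ends e)) + c e * g (snd (ends e))" for e
  proof -
    obtain c0 d0 where lin: "\<forall>t\<in>{0..len e}. fe e t = c0 + d0 * t"
      and e0: "fe e 0 = fv (fst (ends e))" and eL: "fe e (len e) = fv (snd (ends e))"
      using assms(2) unfolding edgewise_linear_def by blast
    define A where "A = \<bar>fv (fst (ends e))\<bar> powr p"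
    define B where "B = \<bar>fv (snd (ends e))\<bar> powr p"
    have AB: "A \<ge> 0" "B \<ge> 0" by (auto simp: A_def B_def)
    have "ennreal (a e) * (\<integral>\<^sup>+ t\<in>{0<..<len e}. ennreal (\<bar>fe e t\<bar> powr p) \<partial>lborel)
        \<le> ennreal (a e) * ennreal (len e / 2 * (A + B))"
      using edge_bound[OF lenp assms(3) lin] e0 eL unfolding A_def B_def
      by (intro mult_left_mono) auto
    also have "\<dots> = ennreal (a e * (len e / 2 * (A + B)))"
      by (rule ennreal_mult[symmetric]) (use ap[of e] lenp[of e] AB in auto)
    also have "a e * (len e / 2 * (A + B)) = edge_mass len a e / 2 * A + edge_mass len a e / 2 * B"
      by (simp add: edge_mass_def field_simps)
    also have "ennreal \<dots> = c e * g (fst (ends e)) + c e * g (snd (ends e))"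
    proof -
      have M: "edge_mass len a e / 2 \<ge> 0" using ap[of e] lenp[of e] by (simp add: edge_mass_def)
      have "ennreal (edge_mass len a e / 2 * A + edge_mass len a e / 2 * B)
          = ennreal (edge_mass len a e / 2 * A) + ennreal (edge_mass len a e / 2 * B)"
        by (rule ennreal_plus) (use M AB in auto)
      also have "\<dots> = c e * g (fst (ends e)) + c e * g (snd (ends e))"
        unfolding c_def g_def A_def[symmetric] B_def[symmetric]
        by (simp only: ennreal_mult[OF M AB(1)] ennreal_mult[OF M AB(2)])
      finally show ?thesis .
    qed
    finally show ?thesis .
  qed
  have "XE \<le> (\<integral>\<^sup>+ e. c e * g (fst (ends e)) + c e * g (snd (ends e)) \<partial>count_space UNIV)"
    unfolding XE_def by (intro nn_integral_mono edge)
  also have "\<dots> = (\<integral>\<^sup>+ e. c e * g (fst (ends e)) \<partial>count_space UNIV)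
      + (\<integral>\<^sup>+ e. c e * g (snd (ends e)) \<partial>count_space UNIV)"
    by (rule nn_integral_add) auto
  also have "\<dots> = (\<integral>\<^sup>+ v. g v * S1 v \<partial>count_space UNIV) + (\<integral>\<^sup>+ v. g v * S2 v \<partial>count_space UNIV)"
    unfolding S1_def S2_def
    using nn_count_reindex[where c=c and g=g and k="\<lambda>e. fst (ends e)"]
      nn_count_reindex[where c=c and g=g and k="\<lambda>e. snd (ends e)"] by simp
  also have "\<dots> = (\<integral>\<^sup>+ v. g v * S1 v + g v * S2 v \<partial>count_space UNIV)"
    by (rule nn_integral_add[symmetric]) auto
  also have "\<dots> \<le> (\<integral>\<^sup>+ v. \<rho> * ennreal (Vm v * \<bar>fv v\<bar> powr p) \<partial>count_space UNIV)"
  proof (intro nn_integral_mono)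
    fix v
    have "S1 v + S2 v = half_degree ends len a Vm v * ennreal (Vm v)"
      unfolding hd using Vp[of v] by (simp add: ennreal_divide_times)
    also have "\<dots> \<le> \<rho> * ennreal (Vm v)"
      unfolding \<rho>_def rho_sup_def by (intro mult_right_mono SUP_upper) auto
    finally have "g v * S1 v + g v * S2 v \<le> g v * (\<rho> * ennreal (Vm v))"
      by (simp add: distrib_left[symmetric] mult_left_mono)
    also have "\<dots> = \<rho> * ennreal (Vm v * \<bar>fv v\<bar> powr p)"
      using Vp[of v] unfolding g_def by (simp add: ennreal_mult mult_ac)
    finally show "g v * S1 v + g v * S2 v \<le> \<rho> * ennreal (Vm v * \<bar>fv v\<bar> powr p)" .
  qed
  also have "\<dots> = \<rho> * XV"
    unfolding XV_def by (rule nn_integral_cmult) auto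
  finally have "XE \<le> \<rho> * XV" .
  then have "enn_root p XE \<le> enn_root p (\<rho> * XV)" by (rule enn_root_mono[OF p0])
  also have "\<dots> = enn_root p \<rho> * enn_root p XV" by (rule enn_root_mult[OF p0])
  finally show ?thesis unfolding norm_E_def norm_V_def XE_def XV_def \<rho>_def .
qed

end
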